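(* Let $G$ be a graph with vertex set $A \cup B$, where $A$ and $B$ are disjoint. In each of the following cases there is a fractional triangle packing $\omega$ in $G$ which assigns positive weight only to cross triangles (triangles with at least one vertex in $A$ and at least one in $B$), such that $\omega(e) = 1/2$ for every edge $e$ of $G$ with both ends in $A$ or both ends in $B$: (a) $2 \le |A| \le |B| \le |A| + 2$, and the bipartite graph $G[A,B]$ of edges of $G$ between $A$ and $B$ is complete bipartite; (b) $3 \le |A| \le |B| \le |A| + 1$, and $G[A,B]$ is a complete bipartite graph minus a matching; (c) $3 \le |A| \le |B| \le |A| + 1$, and $G[A,B]$ is a complete bipartite graph minus two edges that share a common vertex in $A$; (d) $|A| = 3$, $|B| = 5$, and $G[A,B]$ is a complete bipartite graph minus a matching of size $2$.
   Context: A fractional triangle packing in a graph $G$ is a function $\omega$ from the set of triangles of $G$ to $[0,1]$ such that $\omega(e) := \sum_{T \ni e}\omega(T) \le 1$ for every edge $e$ of $G$, where the sum is over triangles $T$ of $G$ containing $e$. *)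

theory Defs
  imports Complex_Main
begin

definition simple_graph :: "'a set \<Rightarrow> 'a set set \<Rightarrow> bool" where
  "simple_graph V E \<longleftrightarrow> finite V \<and> (\<forall>e\<in>E. e \<subseteq> V \<and> card e = 2)"

definition triangles :: "'a set \<Rightarrow> 'a set set \<Rightarrow> 'a set set" where
  "triangles V E = {T. T \<subseteq> V \<and> card T = 3 \<and> (\<forall>x\<in>T. \<forall>y\<in>T. x \<noteq> y \<longrightarrow> {x, y} \<in> E)}"

definition edge_weight :: "'a set \<Rightarrow> 'a set set \<Rightarrow> ('a set \<Rightarrow> real) \<Rightarrow> 'a set \<Rightarrow> real" where
  "edge_weight V E \<omega> e = (\<Sum>T\<in>{T\<in>triangles V E. e \<subseteq> T}. \<omega> T)"

definition frac_triangle_packing :: "'a set \<Rightarrow> 'a set set \<Rightarrow> ('a set \<Rightarrow> real) \<Rightarrow> bool" where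
  "frac_triangle_packing V E \<omega> \<longleftrightarrow>
     (\<forall>T\<in>triangles V E. 0 \<le> \<omega> T \<and> \<omega> T \<le> 1) \<and>
     (\<forall>e\<in>E. edge_weight V E \<omega> e \<le> 1)"

definition cross :: "'a set \<Rightarrow> 'a set \<Rightarrow> 'a set \<Rightarrow> bool" where
  "cross A B T \<longleftrightarrow> T \<inter> A \<noteq> {} \<and> T \<inter> B \<noteq> {}"

definition bip_edges :: "'a set set \<Rightarrow> 'a set \<Rightarrow> 'a set \<Rightarrow> 'a set set" where
  "bip_edges E A B = {e\<in>E. e \<inter> A \<noteq> {} \<and> e \<inter> B \<noteq> {}}"

definition complete_bip :: "'a set \<Rightarrow> 'a set \<Rightarrow> 'a set set" where
  "complete_bip A B = {{a, b} | a b. a \<in> A \<and> b \<in> B}"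

definition is_matching :: "'a set set \<Rightarrow> bool" where
  "is_matching M \<longleftrightarrow> (\<forall>e\<in>M. \<forall>f\<in>M. e \<noteq> f \<longrightarrow> e \<inter> f = {})"

end

theory Submission
  imports Defs
begin

definition omg :: "'a set \<Rightarrow> 'a set \<Rightarrow> ('a \<Rightarrow> 'a \<Rightarrow> bool) \<Rightarrow> ('a set \<Rightarrow> 'a \<Rightarrow> real) \<Rightarrow> ('a set \<Rightarrow> 'a \<Rightarrow> real) \<Rightarrow> 'a set \<Rightarrow> real" where
"omg A B r fA fB T = (if card (T\<inter>A) = 2 \<and> card (T\<inter>B) = 1 \<and> (\<forall>x\<in>T\<inter>A. r x (the_elem (T\<inter>B)))
   then fA (T\<inter>A) (the_elem (T\<inter>B))
   else if card (T\<inter>B) = 2 \<and> card (T\<inter>A) = 1 \<and> (\<forall>c\<in>T\<inter>B. r (the_elem (T\<inter>A)) c)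
   then fB (T\<inter>B) (the_elem (T\<inter>A)) else 0)"

lemma omg_swap: "omg A B r fA fB T = omg B A (\<lambda>c x. r x c) fB fA T"
  unfolding omg_def by auto

lemma omg_AAB:
  assumes "u \<in> A" "v \<in> A" "u \<noteq> v" "z \<in> B" "A \<inter> B = {}"
  shows "omg A B r fA fB {u,v,z} = (if r u z \<and> r v z then fA {u,v} z else 0)"
proof -
  have 1: "{u,v,z} \<inter> A = {u,v}" "{u,v,z} \<inter> B = {z}" using assms by auto
  show ?thesis unfolding omg_def 1 using assms by auto
qed

lemma omg_AAA:
  assumes "u \<in> A" "v \<in> A" "z \<in> A" "u \<noteq> v" "z \<noteq> u" "z \<noteq> v" "A \<inter> B = {}"
  shows "omg A B r fA fB {u,v,z} = 0"
proof -
  have 1: "{u,v,z} \<inter> A = {u,v,z}" "{u,v,z} \<inter> B = {}" using assms by auto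
  show ?thesis unfolding omg_def 1 using assms by auto
qed

lemma tri_third:
  assumes G: "simple_graph V E" and e: "{u,v} \<in> E" and uv: "u \<noteq> v"
  shows "edge_weight V E w {u,v} = (\<Sum>z\<in>{z\<in>V-{u,v}. {u,z}\<in>E \<and> {v,z}\<in>E}. w {u,v,z})"
proof -
  let ?N = "{z\<in>V-{u,v}. {u,z}\<in>E \<and> {v,z}\<in>E}"
  have eq: "{T\<in>triangles V E. {u,v} \<subseteq> T} = (\<lambda>z. {u,v,z}) ` ?N"
  proof (intro equalityI subsetI)
    fix T assume "T \<in> {T\<in>triangles V E. {u,v} \<subseteq> T}"
    hence T: "T \<subseteq> V" "card T = 3" "\<forall>x\<in>T. \<forall>y\<in>T. x \<noteq> y \<longrightarrow> {x,y}\<in>E" "{u,v} \<subseteq> T"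
      unfolding triangles_def by auto
    have fin: "finite T" using T(2) by (metis card.infinite zero_neq_numeral)
    have "card (T - {u,v}) = 1" using T fin uv by (simp add: card_Diff_subset)
    then obtain z where z: "T - {u,v} = {z}" by (meson card_1_singletonE)
    hence Tz: "T = {u,v,z}" using T(4) by auto
    have zz: "z \<in> T" "z \<noteq> u" "z \<noteq> v" using z by auto
    have "z \<in> ?N" using zz T by auto
    thus "T \<in> (\<lambda>z. {u,v,z}) ` ?N" using Tz by auto
  next
    fix T assume "T \<in> (\<lambda>z. {u,v,z}) ` ?N"
    then obtain z where z: "z \<in> ?N" "T = {u,v,z}" by auto
    have V: "u \<in> V" "v \<in> V" using G e unfolding simple_graph_def by auto
    have "{v,u} \<in> E" "{z,u}\<in>E" "{z,v}\<in>E" using e z by (auto simp: insert_commute)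
    thus "T \<in> {T\<in>triangles V E. {u,v} \<subseteq> T}" using z uv V e
      unfolding triangles_def by auto
  qed
  have inj: "inj_on (\<lambda>z. {u,v,z}) ?N"
    by (rule inj_onI) auto
  show ?thesis unfolding edge_weight_def eq using sum.reindex[OF inj] by simp
qed


lemma inner_A:
  assumes G: "simple_graph (A\<union>B) E" and disj: "A \<inter> B = {}"
    and rE: "\<And>x c. r x c \<Longrightarrow> x\<in>A \<and> c\<in>B \<and> {x,c}\<in>E"
    and uv: "u\<in>A" "v\<in>A" "u\<noteq>v" and e: "{u,v}\<in>E"
  shows "edge_weight (A\<union>B) E (omg A B r fA fB) {u,v} = (\<Sum>c\<in>{c\<in>B. r u c \<and> r v c}. fA {u,v} c)"
proof -
  let ?V = "A \<union> B"
  have fin: "finite ?V" using G unfolding simple_graph_def by auto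
  have "edge_weight ?V E (omg A B r fA fB) {u,v} =
     (\<Sum>z\<in>{z\<in>?V-{u,v}. {u,z}\<in>E \<and> {v,z}\<in>E}. omg A B r fA fB {u,v,z})"
    by (rule tri_third[OF G e uv(3)])
  also have "\<dots> = (\<Sum>z\<in>?V-{u,v}. if {u,z}\<in>E \<and> {v,z}\<in>E then omg A B r fA fB {u,v,z} else 0)"
    using fin by (intro sum.inter_filter) auto
  also have "\<dots> = (\<Sum>z\<in>?V-{u,v}. if z \<in> B \<and> r u z \<and> r v z then fA {u,v} z else 0)"
  proof (rule sum.cong[OF refl])
    fix z assume z: "z \<in> ?V - {u,v}"
    show "(if {u,z}\<in>E \<and> {v,z}\<in>E then omg A B r fA fB {u,v,z} else 0) =
          (if z \<in> B \<and> r u z \<and> r v z then fA {u,v} z else 0)"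
    proof (cases "z \<in> A")
      case True
      hence "z \<notin> B" using disj by auto
      thus ?thesis using omg_AAA[OF uv(1,2) True uv(3) _ _ disj] z by auto
    next
      case False
      hence zB: "z \<in> B" using z by auto
      show ?thesis using omg_AAB[OF uv zB disj, of r fA fB] rE[of u z] rE[of v z] by auto
    qed
  qed
  also have "\<dots> = (\<Sum>z\<in>{z\<in>?V-{u,v}. z \<in> B \<and> r u z \<and> r v z}. fA {u,v} z)"
    using fin by (intro sum.inter_filter[symmetric]) auto
  also have "{z\<in>?V-{u,v}. z \<in> B \<and> r u z \<and> r v z} = {c\<in>B. r u c \<and> r v c}"
    using uv disj by auto
  finally show ?thesis .
qed

lemma inner_B:
  assumes G: "simple_graph (A\<union>B) E" and disj: "A \<inter> B = {}"
    and rE: "\<And>x c. r x c \<Longrightarrow> x\<in>A \<and> c\<in>B \<and> {x,c}\<in>E"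
    and uv: "u\<in>B" "v\<in>B" "u\<noteq>v" and e: "{u,v}\<in>E"
  shows "edge_weight (A\<union>B) E (omg A B r fA fB) {u,v} = (\<Sum>x\<in>{x\<in>A. r x u \<and> r x v}. fB {u,v} x)"
proof -
  have G': "simple_graph (B\<union>A) E" using G by (simp add: Un_commute)
  have d': "B \<inter> A = {}" using disj by auto
  have r': "\<And>c x. r x c \<Longrightarrow> c\<in>B \<and> x\<in>A \<and> {c,x}\<in>E" using rE by (metis insert_commute)
  have "omg A B r fA fB = omg B A (\<lambda>c x. r x c) fB fA" using omg_swap by blast
  moreover have "A \<union> B = B \<union> A" by auto
  ultimately show ?thesis using inner_A[OF G' d' _ uv e, of "\<lambda>c x. r x c" fB fA] r' by simp
qed

lemma cross_load:
  assumes G: "simple_graph (A\<union>B) E" and disj: "A \<inter> B = {}"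
    and rE: "\<And>x c. r x c \<Longrightarrow> x\<in>A \<and> c\<in>B \<and> {x,c}\<in>E"
    and nnA: "\<And>P c. 0 \<le> fA P c" and nnB: "\<And>Q x. 0 \<le> fB Q x"
    and xc: "x\<in>A" "c\<in>B" and e: "{x,c}\<in>E"
  shows "edge_weight (A\<union>B) E (omg A B r fA fB) {x,c} \<le>
    (if r x c then (\<Sum>y\<in>{y\<in>A-{x}. r y c}. fA {x,y} c) + (\<Sum>d\<in>{d\<in>B-{c}. r x d}. fB {c,d} x) else 0)"
proof -
  let ?V = "A \<union> B"
  have fin: "finite ?V" using G unfolding simple_graph_def by auto
  have xc': "x \<noteq> c" using xc disj by auto
  have "edge_weight ?V E (omg A B r fA fB) {x,c} =
     (\<Sum>z\<in>{z\<in>?V-{x,c}. {x,z}\<in>E \<and> {c,z}\<in>E}. omg A B r fA fB {x,c,z})"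
    by (rule tri_third[OF G e xc'])
  also have "\<dots> = (\<Sum>z\<in>?V-{x,c}. if {x,z}\<in>E \<and> {c,z}\<in>E then omg A B r fA fB {x,c,z} else 0)"
    using fin by (intro sum.inter_filter) auto
  also have "\<dots> \<le> (\<Sum>z\<in>?V-{x,c}. (if r x c \<and> z \<in> A \<and> r z c then fA {x,z} c else 0)
       + (if r x c \<and> z \<in> B \<and> r x z then fB {c,z} x else 0))"
  proof (rule sum_mono)
    fix z assume z: "z \<in> ?V - {x,c}"
    show "(if {x,z}\<in>E \<and> {c,z}\<in>E then omg A B r fA fB {x,c,z} else 0) \<le>
       (if r x c \<and> z \<in> A \<and> r z c then fA {x,z} c else 0)
       + (if r x c \<and> z \<in> B \<and> r x z then fB {c,z} x else 0)"
    proof (cases "z \<in> A")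
      case True
      hence "z \<notin> B" using disj by auto
      have "omg A B r fA fB {x,c,z} = omg A B r fA fB {x,z,c}" by (simp add: insert_commute)
      also have "\<dots> = (if r x c \<and> r z c then fA {x,z} c else 0)"
        using omg_AAB[OF xc(1) True _ xc(2) disj] z by auto
      finally show ?thesis using \<open>z \<notin> B\<close> True nnA[of "{x,z}" c] by auto
    next
      case False
      hence zB: "z \<in> B" using z by auto
      have "omg A B r fA fB {x,c,z} = omg B A (\<lambda>c x. r x c) fB fA {c,z,x}"
        using omg_swap by (metis insert_commute)
      also have "\<dots> = (if r x c \<and> r x z then fB {c,z} x else 0)"
        using omg_AAB[OF xc(2) zB _ xc(1), of "\<lambda>c x. r x c" fB fA] z zB disj by (auto simp: Int_commute)
      finally show ?thesis using False zB nnB[of "{c,z}" x] by auto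
    qed
  qed
  also have "\<dots> = (\<Sum>z\<in>?V-{x,c}. if r x c \<and> z \<in> A \<and> r z c then fA {x,z} c else 0)
       + (\<Sum>z\<in>?V-{x,c}. if r x c \<and> z \<in> B \<and> r x z then fB {c,z} x else 0)"
    by (rule sum.distrib)
  also have "\<dots> = (\<Sum>z\<in>{z\<in>?V-{x,c}. r x c \<and> z \<in> A \<and> r z c}. fA {x,z} c)
       + (\<Sum>z\<in>{z\<in>?V-{x,c}. r x c \<and> z \<in> B \<and> r x z}. fB {c,z} x)"
    using fin by (simp add: sum.inter_filter[symmetric])
  also have "\<dots> = (if r x c then (\<Sum>y\<in>{y\<in>A-{x}. r y c}. fA {x,y} c) + (\<Sum>d\<in>{d\<in>B-{c}. r x d}. fB {c,d} x) else 0)"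
  proof (cases "r x c")
    case True
    have "{z\<in>?V-{x,c}. r x c \<and> z \<in> A \<and> r z c} = {y\<in>A-{x}. r y c}"
         "{z\<in>?V-{x,c}. r x c \<and> z \<in> B \<and> r x z} = {d\<in>B-{c}. r x d}"
      using True xc disj by auto
    thus ?thesis using True by simp
  qed simp
  finally show ?thesis .
qed


lemma first_le:
  fixes fA :: "'a set \<Rightarrow> 'a \<Rightarrow> real"
  assumes finB: "finite B" and nnA: "\<And>P c. 0 \<le> fA P c"
    and sumA: "\<And>x y. x\<in>A \<Longrightarrow> y\<in>A \<Longrightarrow> x\<noteq>y \<Longrightarrow> (\<Sum>c\<in>{c\<in>B. r x c \<and> r y c}. fA {x,y} c) = 1/2"
    and h: "card (T\<inter>A) = 2" "card (T\<inter>B) = 1" "\<forall>x\<in>T\<inter>A. r x (the_elem (T\<inter>B))"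
  shows "fA (T\<inter>A) (the_elem (T\<inter>B)) \<le> 1/2"
proof -
  obtain x y where xy: "T\<inter>A = {x,y}" "x\<noteq>y" using h(1) by (meson card_2_iff)
  obtain c where c: "T\<inter>B = {c}" using h(2) by (meson card_1_singletonE)
  have rc: "r x c" "r y c" using h(3) xy c by auto
  have "fA {x,y} c \<le> (\<Sum>c\<in>{c\<in>B. r x c \<and> r y c}. fA {x,y} c)"
    by (rule member_le_sum) (use rc c finB nnA in auto)
  also have "\<dots> = 1/2" using sumA xy by auto
  finally show ?thesis using xy c by simp
qed

lemma main:
  fixes fA fB :: "'a set \<Rightarrow> 'a \<Rightarrow> real"
  assumes G: "simple_graph (A\<union>B) E" and disj: "A \<inter> B = {}"
    and rE: "\<And>x c. r x c \<Longrightarrow> x\<in>A \<and> c\<in>B \<and> {x,c}\<in>E"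
    and nnA: "\<And>P c. 0 \<le> fA P c" and nnB: "\<And>Q x. 0 \<le> fB Q x"
    and sumA: "\<And>x y. x\<in>A \<Longrightarrow> y\<in>A \<Longrightarrow> x\<noteq>y \<Longrightarrow> (\<Sum>c\<in>{c\<in>B. r x c \<and> r y c}. fA {x,y} c) = 1/2"
    and sumB: "\<And>c d. c\<in>B \<Longrightarrow> d\<in>B \<Longrightarrow> c\<noteq>d \<Longrightarrow> (\<Sum>x\<in>{x\<in>A. r x c \<and> r x d}. fB {c,d} x) = 1/2"
    and load: "\<And>x c. r x c \<Longrightarrow> (\<Sum>y\<in>{y\<in>A-{x}. r y c}. fA {x,y} c) + (\<Sum>d\<in>{d\<in>B-{c}. r x d}. fB {c,d} x) \<le> 1"
  shows "\<exists>\<omega>. frac_triangle_packing (A \<union> B) E \<omega> \<and>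
             (\<forall>T\<in>triangles (A \<union> B) E. 0 < \<omega> T \<longrightarrow> cross A B T) \<and>
             (\<forall>e\<in>E. (e \<subseteq> A \<or> e \<subseteq> B) \<longrightarrow> edge_weight (A \<union> B) E \<omega> e = 1 / 2)"
proof (intro exI conjI)
  let ?w = "omg A B r fA fB"
  have finA: "finite A" and finB: "finite B" using G unfolding simple_graph_def by auto
  have nn: "0 \<le> ?w T" for T unfolding omg_def using nnA nnB by auto
  have le: "?w T \<le> 1/2" for T
  proof -
    have sumB': "\<And>x y. x\<in>B \<Longrightarrow> y\<in>B \<Longrightarrow> x\<noteq>y \<Longrightarrow> (\<Sum>c\<in>{c\<in>A. (\<lambda>c x. r x c) x c \<and> (\<lambda>c x. r x c) y c}. fB {x,y} c) = 1/2"
      using sumB by simp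
    show ?thesis unfolding omg_def
      using first_le[of B fA A r T, OF finB nnA sumA] first_le[of A fB B "\<lambda>c x. r x c" T, OF finA nnB sumB'] by auto
  qed
  have inner: "edge_weight (A \<union> B) E ?w e = 1/2" if e: "e \<in> E" "e \<subseteq> A \<or> e \<subseteq> B" for e
  proof -
    obtain u v where uv: "e = {u,v}" "u \<noteq> v" using e G unfolding simple_graph_def by (meson card_2_iff)
    show ?thesis
    proof (cases "e \<subseteq> A")
      case True
      thus ?thesis using inner_A[where u=u and v=v and fA=fA and fB=fB, OF G disj rE] sumA[of u v] uv e by auto
    next
      case False
      hence "e \<subseteq> B" using e by auto
      thus ?thesis using inner_B[where u=u and v=v and fA=fA and fB=fB, OF G disj rE] sumB[of u v] uv e by auto
    qed
  qed
  show "frac_triangle_packing (A \<union> B) E ?w"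
    unfolding frac_triangle_packing_def
  proof (intro conjI ballI)
    fix T show "0 \<le> ?w T" by (rule nn)
    show "?w T \<le> 1" using le[of T] by simp
  next
    fix e assume e: "e \<in> E"
    obtain u v where uv: "e = {u,v}" "u \<noteq> v" "u \<in> A \<union> B" "v \<in> A \<union> B"
      using e G unfolding simple_graph_def by (metis card_2_iff insert_subset)
    show "edge_weight (A \<union> B) E ?w e \<le> 1"
    proof (cases "e \<subseteq> A \<or> e \<subseteq> B")
      case True thus ?thesis using inner[OF e] by simp
    next
      case False
      then obtain x c where xc: "x \<in> A" "c \<in> B" "e = {x,c}" using uv by (auto simp: insert_commute)
      have "edge_weight (A \<union> B) E ?w e \<le> (if r x c then (\<Sum>y\<in>{y\<in>A-{x}. r y c}. fA {x,y} c) + (\<Sum>d\<in>{d\<in>B-{c}. r x d}. fB {c,d} x) else 0)"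
        using cross_load[where r=r and fA=fA and fB=fB, OF G disj rE nnA nnB xc(1,2)] xc e by auto
      also have "\<dots> \<le> 1" using load[of x c] by auto
      finally show ?thesis .
    qed
  qed
  show "\<forall>T\<in>triangles (A \<union> B) E. 0 < ?w T \<longrightarrow> cross A B T"
  proof (intro ballI impI)
    fix T assume "0 < ?w T"
    hence "(card (T\<inter>A) = 2 \<and> card (T\<inter>B) = 1) \<or> (card (T\<inter>B) = 2 \<and> card (T\<inter>A) = 1)"
      unfolding omg_def by (auto split: if_splits)
    thus "cross A B T" unfolding cross_def by auto
  qed
  show "\<forall>e\<in>E. (e \<subseteq> A \<or> e \<subseteq> B) \<longrightarrow> edge_weight (A \<union> B) E ?w e = 1 / 2"
    using inner by auto
qed

lemma set_diff_filter: "{y\<in>A-{x}. P y} = {y\<in>A. y \<noteq> x \<and> P y}" by auto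

lemma uniform:
  fixes A B :: "'a set"
  assumes G: "simple_graph (A\<union>B) E" and disj: "A \<inter> B = {}"
    and rE: "\<And>x c. r x c \<Longrightarrow> x\<in>A \<and> c\<in>B \<and> {x,c}\<in>E"
    and commA: "\<And>x y. x\<in>A \<Longrightarrow> y\<in>A \<Longrightarrow> x\<noteq>y \<Longrightarrow> {c\<in>B. r x c \<and> r y c} \<noteq> {}"
    and commB: "\<And>c d. c\<in>B \<Longrightarrow> d\<in>B \<Longrightarrow> c\<noteq>d \<Longrightarrow> {x\<in>A. r x c \<and> r x d} \<noteq> {}"
    and load: "\<And>x c. r x c \<Longrightarrow> (\<Sum>y\<in>{y\<in>A-{x}. r y c}. 1/(2*real(card{e\<in>B. r x e \<and> r y e})))
        + (\<Sum>d\<in>{d\<in>B-{c}. r x d}. 1/(2*real(card{z\<in>A. r z c \<and> r z d}))) \<le> 1"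
  shows "\<exists>\<omega>. frac_triangle_packing (A \<union> B) E \<omega> \<and>
             (\<forall>T\<in>triangles (A \<union> B) E. 0 < \<omega> T \<longrightarrow> cross A B T) \<and>
             (\<forall>e\<in>E. (e \<subseteq> A \<or> e \<subseteq> B) \<longrightarrow> edge_weight (A \<union> B) E \<omega> e = 1 / 2)"
proof -
  have finA: "finite A" and finB: "finite B" using G unfolding simple_graph_def by auto
  define fA :: "'a set \<Rightarrow> 'a \<Rightarrow> real" where "fA P c = 1/(2*real(card{e\<in>B. \<forall>z\<in>P. r z e}))" for P c
  define fB :: "'a set \<Rightarrow> 'a \<Rightarrow> real" where "fB Q x = 1/(2*real(card{z\<in>A. \<forall>c\<in>Q. r z c}))" for Q x
  have fA2: "fA {x,y} c = 1/(2*real(card{e\<in>B. r x e \<and> r y e}))" for x y c unfolding fA_def by simp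
  have fB2: "fB {c,d} x = 1/(2*real(card{z\<in>A. r z c \<and> r z d}))" for x d c unfolding fB_def by simp
  show ?thesis
  proof (rule main[OF G disj rE, of r fA fB])
    show "\<And>P c. 0 \<le> fA P c" unfolding fA_def by auto
    show "\<And>Q x. 0 \<le> fB Q x" unfolding fB_def by auto
    show "(\<Sum>c\<in>{c\<in>B. r x c \<and> r y c}. fA {x,y} c) = 1/2" if "x\<in>A" "y\<in>A" "x\<noteq>y" for x y
    proof -
      have "finite {c\<in>B. r x c \<and> r y c}" using finB by auto
      hence "card {c\<in>B. r x c \<and> r y c} > 0" using commA[OF that] by (simp add: card_gt_0_iff)
      thus ?thesis unfolding fA2 by simp
    qed
    show "(\<Sum>x\<in>{x\<in>A. r x c \<and> r x d}. fB {c,d} x) = 1/2" if "c\<in>B" "d\<in>B" "c\<noteq>d" for c d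
    proof -
      have "finite {x\<in>A. r x c \<and> r x d}" using finA by auto
      hence "card {x\<in>A. r x c \<and> r x d} > 0" using commB[OF that] by (simp add: card_gt_0_iff)
      thus ?thesis unfolding fB2 by simp
    qed
    show "\<And>x c. r x c \<Longrightarrow> (\<Sum>y\<in>{y\<in>A-{x}. r y c}. fA {x,y} c) + (\<Sum>d\<in>{d\<in>B-{c}. r x d}. fB {c,d} x) \<le> 1"
      unfolding fA2 fB2 by (rule load)
  qed (simp_all add: rE)
qed

lemma case_a:
  fixes A B :: "'a set"
  assumes G: "simple_graph (A\<union>B) E" and disj: "A \<inter> B = {}"
    and c: "2 \<le> card A" "card A \<le> card B" "card B \<le> card A + 2"
    and bip: "bip_edges E A B = complete_bip A B"
  shows "\<exists>\<omega>. frac_triangle_packing (A \<union> B) E \<omega> \<and>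
             (\<forall>T\<in>triangles (A \<union> B) E. 0 < \<omega> T \<longrightarrow> cross A B T) \<and>
             (\<forall>e\<in>E. (e \<subseteq> A \<or> e \<subseteq> B) \<longrightarrow> edge_weight (A \<union> B) E \<omega> e = 1 / 2)"
proof -
  have finA: "finite A" and finB: "finite B" using G unfolding simple_graph_def by auto
  define r where "r x c \<longleftrightarrow> x \<in> A \<and> c \<in> B" for x c
  have rE: "x\<in>A \<and> c\<in>B \<and> {x,c}\<in>E" if "r x c" for x c
  proof -
    have "{x,c} \<in> complete_bip A B" using that unfolding r_def complete_bip_def by auto
    thus ?thesis using that bip unfolding r_def bip_edges_def by auto
  qed
  have cB: "{e\<in>B. r x e \<and> r y e} = B" if "x\<in>A" "y\<in>A" for x y using that r_def by auto
  have cA: "{z\<in>A. r z c \<and> r z d} = A" if "c\<in>B" "d\<in>B" for c d using that r_def by auto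
  define a where "a = card A"
  define b where "b = card B"
  have ne: "A \<noteq> {}" "B \<noteq> {}" using c finA finB by auto
  show ?thesis
  proof (rule uniform[OF G disj rE])
    show "{c\<in>B. r x c \<and> r y c} \<noteq> {}" if "x\<in>A" "y\<in>A" for x y using cB[OF that] ne by simp
    show "{x\<in>A. r x c \<and> r x d} \<noteq> {}" if "c\<in>B" "d\<in>B" for c d using cA[OF that] ne by simp
    fix x c assume xc: "r x c"
    hence xc': "x \<in> A" "c \<in> B" unfolding r_def by auto
    have s1: "{y\<in>A-{x}. r y c} = A - {x}" using xc' r_def by auto
    have s2: "{d\<in>B-{c}. r x d} = B - {c}" using xc' r_def by auto
    have "(\<Sum>y\<in>{y\<in>A-{x}. r y c}. 1/(2*real(card{e\<in>B. r x e \<and> r y e})))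
        + (\<Sum>d\<in>{d\<in>B-{c}. r x d}. 1/(2*real(card{z\<in>A. r z c \<and> r z d})))
       = real (a - 1) / (2 * real b) + real (b - 1) / (2 * real a)"
    proof -
      have "(\<Sum>y\<in>A-{x}. 1/(2*real(card{e\<in>B. r x e \<and> r y e}))) = (\<Sum>y\<in>A-{x}. 1/(2*real b))"
        by (rule sum.cong) (use cB xc' b_def in auto)
      also have "\<dots> = real (a - 1) / (2 * real b)"
        using xc' finA a_def by (simp add: card_Diff_singleton of_nat_diff)
      finally have t1: "(\<Sum>y\<in>A-{x}. 1/(2*real(card{e\<in>B. r x e \<and> r y e}))) = real (a - 1) / (2 * real b)" .
      have "(\<Sum>d\<in>B-{c}. 1/(2*real(card{z\<in>A. r z c \<and> r z d}))) = (\<Sum>y\<in>B-{c}. 1/(2*real a))"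
        by (rule sum.cong) (use cA xc' a_def in auto)
      also have "\<dots> = real (b - 1) / (2 * real a)"
        using xc' finB b_def by (simp add: card_Diff_singleton of_nat_diff)
      finally have t2: "(\<Sum>d\<in>B-{c}. 1/(2*real(card{z\<in>A. r z c \<and> r z d}))) = real (b - 1) / (2 * real a)" .
      show ?thesis unfolding s1 s2 t1 t2 ..
    qed
    also have "\<dots> \<le> 1"
    proof -
      have ab: "2 \<le> a" "a \<le> b" "b \<le> a + 2" using c a_def b_def by auto
      define k where "k = b - a"
      have k: "b = a + k" "k \<le> 2" using ab k_def by auto
      have e1: "real (a-1) = real a - 1" "real (b-1) = real b - 1" using ab by (auto simp: of_nat_diff)
      have pos: "real a > 0" "real b > 0" using ab by auto
      have rb: "real b = real a + real k" using k by simp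
      have kk: "real k * real k \<le> real k + 2"
      proof -
        have "k = 0 \<or> k = 1 \<or> k = 2" using k by auto
        thus ?thesis by auto
      qed
      have key: "(real a - 1) * real a + (real b - 1) * real b \<le> 1 * (2 * real a * real b)"
      proof -
        have "2 * real a * real b - ((real a - 1) * real a + (real b - 1) * real b) = 2*real a + real k - real k * real k"
          unfolding rb by (simp add: algebra_simps)
        thus ?thesis using kk ab by simp
      qed
      have "(real a - 1) / (2 * real b) + (real b - 1) / (2 * real a)
          = ((real a - 1) * real a + (real b - 1) * real b) / (2 * real a * real b)"
        using pos by (simp add: field_simps)
      also have "\<dots> \<le> 1" using key pos by (simp add: divide_le_eq)
      finally show ?thesis unfolding e1 .
    qed
    finally show "(\<Sum>y\<in>{y\<in>A-{x}. r y c}. 1/(2*real(card{e\<in>B. r x e \<and> r y e})))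
        + (\<Sum>d\<in>{d\<in>B-{c}. r x d}. 1/(2*real(card{z\<in>A. r z c \<and> r z d}))) \<le> 1" .
  qed
qed

lemma extend_matching:
  assumes finA: "finite A" and finB: "finite B" and disj: "A \<inter> B = {}" and cab: "card A \<le> card B"
    and MC: "M \<subseteq> complete_bip A B" and mat: "is_matching M"
  shows "\<exists>\<mu>. inj_on \<mu> A \<and> \<mu> ` A \<subseteq> B \<and> (\<forall>x\<in>A. \<forall>c\<in>B. {x,c}\<in>M \<longrightarrow> \<mu> x = c)"
proof -
  have uniq: "c = c'" if "x\<in>A" "c\<in>B" "c'\<in>B" "{x,c}\<in>M" "{x,c'}\<in>M" for x c c'
  proof (rule ccontr)
    assume "c \<noteq> c'"
    hence "{x,c} \<noteq> {x,c'}" by (auto simp: doubleton_eq_iff)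
    hence "{x,c} \<inter> {x,c'} = {}" using mat[unfolded is_matching_def, rule_format, OF that(4) that(5)] by simp
    thus False by auto
  qed
  have uniq2: "x = y" if "x\<in>A" "y\<in>A" "c\<in>B" "{x,c}\<in>M" "{y,c}\<in>M" for x y c
  proof (rule ccontr)
    assume "x \<noteq> y"
    hence "{x,c} \<noteq> {y,c}" using that disj by (auto simp: doubleton_eq_iff)
    hence "{x,c} \<inter> {y,c} = {}" using mat[unfolded is_matching_def, rule_format, OF that(4) that(5)] by simp
    thus False by auto
  qed
  define A1 where "A1 = {x\<in>A. \<exists>c\<in>B. {x,c}\<in>M}"
  define m where "m x = (SOME c. c\<in>B \<and> {x,c}\<in>M)" for x
  have m: "m x \<in> B \<and> {x, m x}\<in>M" if xA1: "x \<in> A1" for x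
  proof -
    obtain c where "c\<in>B \<and> {x,c}\<in>M" using xA1 unfolding A1_def by auto
    thus ?thesis unfolding m_def by (rule someI)
  qed
  have injm: "inj_on m A1"
  proof (rule inj_onI)
    fix x y assume xy: "x \<in> A1" "y \<in> A1" "m x = m y"
    have "x \<in> A" "y \<in> A" using xy unfolding A1_def by auto
    thus "x = y" using uniq2[of x y "m x"] m[OF xy(1)] m[OF xy(2)] xy(3) by auto
  qed
  have A1A: "A1 \<subseteq> A" unfolding A1_def by auto
  have mB: "m ` A1 \<subseteq> B" using m by auto
  have fA1: "finite A1" using A1A finA finite_subset by auto
  have "card (A - A1) = card A - card A1" using A1A fA1 by (simp add: card_Diff_subset)
  also have "\<dots> \<le> card B - card (m ` A1)" using cab card_image[OF injm] by simp
  also have "\<dots> = card (B - m ` A1)" using mB fA1 by (simp add: card_Diff_subset)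
  finally obtain f where f: "f ` (A - A1) \<subseteq> B - m ` A1" "inj_on f (A - A1)"
    using card_le_inj[of "A - A1" "B - m ` A1"] finA finB by auto
  define mu where "mu x = (if x \<in> A1 then m x else f x)" for x
  show ?thesis
  proof (intro exI conjI ballI impI)
    show "inj_on mu A"
    proof (rule inj_onI)
      fix x y assume xy: "x \<in> A" "y \<in> A" "mu x = mu y"
      show "x = y"
      proof (cases "x \<in> A1"; cases "y \<in> A1")
        assume h: "x \<in> A1" "y \<in> A1"
        hence "m x = m y" using xy unfolding mu_def by simp
        thus ?thesis using h injm by (auto dest: inj_onD)
      next
        assume h: "x \<in> A1" "y \<notin> A1"
        hence "mu x \<in> m ` A1" "mu y \<notin> m ` A1" using xy f unfolding mu_def by auto
        thus ?thesis using xy by simp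
      next
        assume h: "x \<notin> A1" "y \<in> A1"
        hence "mu y \<in> m ` A1" "mu x \<notin> m ` A1" using xy f unfolding mu_def by auto
        thus ?thesis using xy by simp
      next
        assume h: "x \<notin> A1" "y \<notin> A1"
        hence "f x = f y" using xy unfolding mu_def by simp
        thus ?thesis using h xy f(2) by (auto dest: inj_onD)
      qed
    qed
    show "mu ` A \<subseteq> B" using f mB unfolding mu_def by auto
    fix x c assume xc: "x \<in> A" "c \<in> B" "{x,c} \<in> M"
    hence "x \<in> A1" unfolding A1_def by auto
    thus "mu x = c" using uniq[OF xc(1) _ xc(2) _ xc(3)] m unfolding mu_def by auto
  qed
qed

lemma card_pre:
  assumes inj: "inj_on mu A" and fin: "finite A"
  shows "card {z\<in>A. mu z \<in> S} = card (S \<inter> mu ` A)"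
proof -
  have "mu ` {z\<in>A. mu z \<in> S} = S \<inter> mu ` A" by auto
  moreover have "inj_on mu {z\<in>A. mu z \<in> S}" using inj by (rule inj_on_subset) auto
  ultimately show ?thesis using card_image by metis
qed

lemma ident: "(t::real) > 1 \<Longrightarrow> (t-1)/(2*t) + (1/(2*t) + (t-1)/(2*(t-1))) = 1"
  by (simp add: field_simps)

lemma case_b_mu:
  fixes A B :: "'a set"
  assumes G: "simple_graph (A\<union>B) E" and disj: "A \<inter> B = {}"
    and c: "3 \<le> card A" "card A \<le> card B" "card B \<le> card A + 1"
    and inj: "inj_on mu A" and muB: "mu ` A \<subseteq> B"
    and edges: "\<And>x c. x\<in>A \<Longrightarrow> c\<in>B \<Longrightarrow> c \<noteq> mu x \<Longrightarrow> {x,c}\<in>E"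
  shows "\<exists>\<omega>. frac_triangle_packing (A \<union> B) E \<omega> \<and>
             (\<forall>T\<in>triangles (A \<union> B) E. 0 < \<omega> T \<longrightarrow> cross A B T) \<and>
             (\<forall>e\<in>E. (e \<subseteq> A \<or> e \<subseteq> B) \<longrightarrow> edge_weight (A \<union> B) E \<omega> e = 1 / 2)"
proof -
  have finA: "finite A" and finB: "finite B" using G unfolding simple_graph_def by auto
  define a where "a = card A"
  define b where "b = card B"
  define U where "U = mu ` A"
  have cU: "card U = a" unfolding U_def a_def using card_image[OF inj] .
  have UB: "U \<subseteq> B" using muB U_def by simp
  have finU: "finite U" using UB finB finite_subset by auto
  define r where "r x c \<longleftrightarrow> x \<in> A \<and> c \<in> B \<and> c \<noteq> mu x" for x c
  have rE: "x\<in>A \<and> c\<in>B \<and> {x,c}\<in>E" if "r x c" for x c using that edges r_def by auto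
  have NB: "{e\<in>B. r x e \<and> r y e} = B - {mu x, mu y}" if "x\<in>A" "y\<in>A" for x y
    using that r_def by auto
  have NBc: "card {e\<in>B. r x e \<and> r y e} = b - 2" if "x\<in>A" "y\<in>A" "x \<noteq> y" for x y
  proof -
    have "mu x \<noteq> mu y" using inj that by (auto dest: inj_onD)
    moreover have "mu x \<in> B" "mu y \<in> B" using muB that by auto
    ultimately show ?thesis unfolding NB[OF that(1,2)] b_def using finB
      by (simp add: card_Diff_subset)
  qed
  have NA: "{z\<in>A. r z c \<and> r z d} = A - {z\<in>A. mu z \<in> {c,d}}" if "c\<in>B" "d\<in>B" for c d
    using that r_def by auto
  have NAc: "card {z\<in>A. r z c \<and> r z d} = a - card ({c,d} \<inter> U)" if "c\<in>B" "d\<in>B" for c d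
    unfolding NA[OF that] a_def U_def using finA card_pre[OF inj finA, of "{c,d}"]
    by (simp add: card_Diff_subset)
  have cdU: "card ({c,d} \<inter> U) \<le> 2" for c d
  proof -
    have "card ({c,d} \<inter> U) \<le> card {c,d}" by (rule card_mono) auto
    also have "card {c,d} \<le> 2" by (simp add: card_insert_if)
    finally show ?thesis .
  qed
  have ab: "3 \<le> a" "a \<le> b" "b \<le> a + 1" using c a_def b_def by auto
  show ?thesis
  proof (rule uniform[OF G disj rE])
    show "{c\<in>B. r x c \<and> r y c} \<noteq> {}" if "x\<in>A" "y\<in>A" "x\<noteq>y" for x y
    proof
      assume h: "{c\<in>B. r x c \<and> r y c} = {}"
      have "b - 2 = 0" using NBc[OF that] unfolding h by simp
      thus False using ab by linarith
    qed
    show "{x\<in>A. r x c \<and> r x d} \<noteq> {}" if "c\<in>B" "d\<in>B" "c\<noteq>d" for c d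
    proof
      assume h: "{x\<in>A. r x c \<and> r x d} = {}"
      have "a - card ({c,d} \<inter> U) = 0" using NAc[OF that(1,2)] unfolding h by simp
      thus False using cdU[of c d] ab by linarith
    qed
  next
    fix x c assume xc: "r x c"
    hence x: "x \<in> A" and cB: "c \<in> B" and cmu: "c \<noteq> mu x" unfolding r_def by auto
    have mux: "mu x \<in> U" using x U_def by auto
    define SA where "SA = {y\<in>A-{x}. r y c}"
    define SB where "SB = {d\<in>B-{c}. r x d}"
    have SBeq: "SB = B - {c, mu x}" unfolding SB_def r_def using x by auto
    have SAeq: "SA = A - {z\<in>A. mu z \<in> {mu x, c}}"
      unfolding SA_def r_def using x cB inj by (auto dest: inj_onD)
    have cSA: "card SA = a - card ({mu x, c} \<inter> U)"
      unfolding SAeq a_def U_def using finA card_pre[OF inj finA, of "{mu x, c}"]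
      by (simp add: card_Diff_subset)
    have Apart: "(\<Sum>y\<in>SA. 1/(2*real(card{e\<in>B. r x e \<and> r y e}))) = real (card SA) / (2 * real (b - 2))"
    proof -
      have "(\<Sum>y\<in>SA. 1/(2*real(card{e\<in>B. r x e \<and> r y e}))) = (\<Sum>y\<in>SA. 1/(2*real(b-2)))"
        by (rule sum.cong) (auto simp: SA_def NBc x)
      thus ?thesis by simp
    qed
    have Bterm: "1/(2*real(card{z\<in>A. r z c \<and> r z d})) = 1/(2*real(a - card ({c,d} \<inter> U)))" if "d \<in> SB" for d
      using NAc[of c d] that cB unfolding SB_def by auto
    have "(\<Sum>y\<in>SA. 1/(2*real(card{e\<in>B. r x e \<and> r y e}))) + (\<Sum>d\<in>SB. 1/(2*real(card{z\<in>A. r z c \<and> r z d}))) \<le> 1"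
    proof (cases "b = a")
      case True
      have UeqB: "U = B" using card_subset_eq[OF finB UB] cU True b_def by simp
      have cU': "c \<in> U" using cB UeqB by simp
      have "{mu x, c} \<inter> U = {mu x, c}" using mux cU' by auto
      hence cSA2: "card SA = a - 2" using cSA cmu by simp
      have "(\<Sum>d\<in>SB. 1/(2*real(card{z\<in>A. r z c \<and> r z d}))) = (\<Sum>d\<in>SB. 1/(2*real(a-2)))"
      proof (rule sum.cong[OF refl])
        fix d assume d: "d \<in> SB"
        hence "{c,d} \<inter> U = {c,d}" "c \<noteq> d" using cU' UeqB SBeq by auto
        thus "1/(2*real(card{z\<in>A. r z c \<and> r z d})) = 1/(2*real(a-2))" using Bterm[OF d] by simp
      qed
      also have "\<dots> = real (a-2) / (2*real(a-2))"
      proof -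
        have sub: "{c, mu x} \<subseteq> B" using cB mux UB by auto
        have "card SB = card B - card {c, mu x}" unfolding SBeq using card_Diff_subset[OF _ sub] by simp
        hence "card SB = b - 2" using cmu b_def by simp
        thus ?thesis using True by simp
      qed
      finally have Bp: "(\<Sum>d\<in>SB. 1/(2*real(card{z\<in>A. r z c \<and> r z d}))) = real (a-2) / (2*real(a-2))" .
      have pos: "real (a-2) > 0" using ab by simp
      show ?thesis unfolding Apart Bp cSA2 using True pos by simp
    next
      case False
      hence b1: "b = a + 1" using ab by simp
      have "card (B - U) = 1" using b1 cU UB finU b_def by (simp add: card_Diff_subset)
      then obtain u where u: "B - U = {u}" by (meson card_1_singletonE)
      have uB: "u \<in> B" "u \<notin> U" using u by auto
      have Bins: "B = insert u U" using u UB by auto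
      have pos1: "real (a-1) > 0" "real (a-2) > 0" using ab by auto
      have bm2: "b - 2 = a - 1" using b1 ab by simp
      show ?thesis
      proof (cases "c = u")
        case True
        have "{mu x, c} \<inter> U = {mu x}" using mux True uB by auto
        hence cSA2: "card SA = a - 1" using cSA by simp
        have SBU: "SB = U - {mu x}" unfolding SBeq Bins using True uB by auto
        have "(\<Sum>d\<in>SB. 1/(2*real(card{z\<in>A. r z c \<and> r z d}))) = (\<Sum>d\<in>SB. 1/(2*real(a-1)))"
        proof (rule sum.cong[OF refl])
          fix d assume d: "d \<in> SB"
          hence "{c,d} \<inter> U = {d}" using True uB SBU by auto
          thus "1/(2*real(card{z\<in>A. r z c \<and> r z d})) = 1/(2*real(a-1))" using Bterm[OF d] by simp
        qed
        also have "\<dots> = real (a-1) / (2*real(a-1))"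
        proof -
          have "card SB = a - 1" unfolding SBU using mux finU cU by (simp add: card_Diff_subset)
          thus ?thesis by simp
        qed
        finally have Bp: "(\<Sum>d\<in>SB. 1/(2*real(card{z\<in>A. r z c \<and> r z d}))) = real (a-1) / (2*real(a-1))" .
        show ?thesis unfolding Apart Bp cSA2 bm2 using pos1 by simp
      next
        case False
        hence cU': "c \<in> U" using cB Bins by auto
        have "{mu x, c} \<inter> U = {mu x, c}" using mux cU' by auto
        hence cSA2: "card SA = a - 2" using cSA cmu by simp
        have SBU: "SB = insert u (U - {c, mu x})" unfolding SBeq Bins using False uB mux by auto
        have "(\<Sum>d\<in>SB. 1/(2*real(card{z\<in>A. r z c \<and> r z d}))) = 
              1/(2*real(card{z\<in>A. r z c \<and> r z u})) + (\<Sum>d\<in>U - {c, mu x}. 1/(2*real(card{z\<in>A. r z c \<and> r z d})))"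
          unfolding SBU using uB finU by (subst sum.insert) auto
        also have "1/(2*real(card{z\<in>A. r z c \<and> r z u})) = 1/(2*real(a-1))"
        proof -
          have "{c,u} \<inter> U = {c}" using cU' uB by auto
          thus ?thesis using Bterm[of u] SBU by simp
        qed
        also have "(\<Sum>d\<in>U - {c, mu x}. 1/(2*real(card{z\<in>A. r z c \<and> r z d}))) = (\<Sum>d\<in>U - {c, mu x}. 1/(2*real(a-2)))"
        proof (rule sum.cong[OF refl])
          fix d assume d: "d \<in> U - {c, mu x}"
          hence dSB: "d \<in> SB" using SBU by auto
          have "{c,d} \<inter> U = {c,d}" "c \<noteq> d" using cU' d by auto
          thus "1/(2*real(card{z\<in>A. r z c \<and> r z d})) = 1/(2*real(a-2))" using Bterm[OF dSB] by simp
        qed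
        also have "\<dots> = real (a-2) / (2*real(a-2))"
        proof -
          have "card (U - {c, mu x}) = a - 2" using cU' mux cmu finU cU by (simp add: card_Diff_subset)
          thus ?thesis by simp
        qed
        finally have Bp: "(\<Sum>d\<in>SB. 1/(2*real(card{z\<in>A. r z c \<and> r z d}))) = 1/(2*real(a-1)) + real (a-2) / (2*real(a-2))" .
        have e: "real (a-2) = real (a-1) - 1" using ab by (simp add: of_nat_diff)
        have "real (a - 2) / (2 * real (a - 1)) + (1 / (2 * real (a - 1)) + real (a - 2) / (2 * real (a - 2))) = 1"
          using pos1 unfolding e using ident[of "real (a-1)"] by simp
        thus ?thesis unfolding Apart Bp cSA2 bm2 by simp
      qed
    qed
    thus "(\<Sum>y\<in>{y\<in>A-{x}. r y c}. 1/(2*real(card{e\<in>B. r x e \<and> r y e})))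
        + (\<Sum>d\<in>{d\<in>B-{c}. r x d}. 1/(2*real(card{z\<in>A. r z c \<and> r z d}))) \<le> 1"
      unfolding SA_def SB_def .
  qed
qed

lemma poly_nonneg3: fixes t c0 c1 c2 c3 :: real
  assumes "t \<ge> 0" "c0 \<ge> 0" "c1 \<ge> 0" "c2 \<ge> 0" "c3 \<ge> 0"
  shows "c0 + c1*t + c2*t^2 + c3*t^3 \<ge> 0"
  using assms by (simp add: add_nonneg_nonneg)

lemma I1: fixes a b :: real assumes "a \<ge> 4" "b = a \<or> b = a + 1"
  shows "(a-1)/(2*(b-2)) + (b-3)/(2*a) \<le> 1"
proof -
  have nz: "a \<noteq> 0" "b - 2 \<noteq> 0" using assms by auto
  have pos: "a > 0" "b - 2 > 0" using assms by auto
  define D where "D = 2*a*(b-2)"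
  have e1: "(a-1)/(2*(b-2)) * D = (a-1)*a" unfolding D_def using nz by (simp add: field_simps)
  have e2: "(b-3)/(2*a) * D = (b-3)*(b-2)" unfolding D_def using nz by (simp add: field_simps)
  have Dp: "D > 0" unfolding D_def using pos by simp
  have "(a-1)*a + (b-3)*(b-2) \<le> D"
    using assms(2)
  proof
    assume b: "b = a"
    show ?thesis unfolding D_def b using assms(1) by (simp add: algebra_simps)
  next
    assume b: "b = a + 1"
    show ?thesis unfolding D_def b using assms(1) by (simp add: algebra_simps)
  qed
  hence "((a-1)/(2*(b-2)) + (b-3)/(2*a)) * D \<le> 1 * D"
    unfolding distrib_right e1 e2 by simp
  thus ?thesis using Dp by (simp only: mult_le_cancel_right_pos)
qed

lemma I2: fixes a b :: real assumes "a \<ge> 4" "b = a \<or> b = a + 1"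
  shows "(a-2)/(2*b) + (b-1)/(2*(a-1)) \<le> 1"
proof -
  have nz: "b \<noteq> 0" "a - 1 \<noteq> 0" using assms by auto
  have pos: "b > 0" "a - 1 > 0" using assms by auto
  define D where "D = 2*b*(a-1)"
  have e1: "(a-2)/(2*b) * D = (a-2)*(a-1)" unfolding D_def using nz by (simp add: field_simps)
  have e2: "(b-1)/(2*(a-1)) * D = (b-1)*b" unfolding D_def using nz by (simp add: field_simps)
  have Dp: "D > 0" unfolding D_def using pos by simp
  have "(a-2)*(a-1) + (b-1)*b \<le> D"
    using assms(2)
  proof
    assume b: "b = a"
    show ?thesis unfolding D_def b using assms(1) by (simp add: algebra_simps)
  next
    assume b: "b = a + 1"
    show ?thesis unfolding D_def b using assms(1) by (simp add: algebra_simps)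
  qed
  hence "((a-2)/(2*b) + (b-1)/(2*(a-1))) * D \<le> 1 * D"
    unfolding distrib_right e1 e2 by simp
  thus ?thesis using Dp by (simp only: mult_le_cancel_right_pos)
qed

lemma I3: fixes a b :: real assumes "a \<ge> 4" "b = a \<or> b = a + 1"
  shows "1/(2*(b-2)) + (a-2)/(2*b) + 1/(a-1) + (b-3)/(2*a) \<le> 1"
proof -
  have nz: "a \<noteq> 0" "b - 2 \<noteq> 0" "b \<noteq> 0" "a - 1 \<noteq> 0" using assms by auto
  have pos: "a > 0" "b - 2 > 0" "b > 0" "a - 1 > 0" using assms by auto
  obtain t where t: "a = t + 4" "t \<ge> 0" using assms(1) by (metis add.commute diff_add_cancel diff_ge_0_iff_ge)
  define D where "D = 2*a*b*(a-1)*(b-2)"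
  have e1: "1/(2*(b-2)) * D = a*b*(a-1)" unfolding D_def using nz by (simp add: field_simps)
  have e2: "(a-2)/(2*b) * D = (a-2)*a*(a-1)*(b-2)" unfolding D_def using nz by (simp add: field_simps)
  have e3: "1/(a-1) * D = 2*a*b*(b-2)" unfolding D_def using nz by (simp add: field_simps)
  have e4: "(b-3)/(2*a) * D = (b-3)*b*(a-1)*(b-2)" unfolding D_def using nz by (simp add: field_simps)
  have Dp: "D > 0" unfolding D_def using pos by simp
  have "a*b*(a-1) + (a-2)*a*(a-1)*(b-2) + 2*a*b*(b-2) + (b-3)*b*(a-1)*(b-2) \<le> D"
    using assms(2)
  proof
    assume b: "b = a"
    have "D - (a*b*(a-1) + (a-2)*a*(a-1)*(b-2) + 2*a*b*(b-2) + (b-3)*b*(a-1)*(b-2)) = 8 + 26*t + 14*t^2 + 2*t^3"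
      unfolding D_def b t(1) by (simp add: algebra_simps power2_eq_square power3_eq_cube)
    moreover have "0 \<le> 8 + 26*t + 14*t^2 + 2*t^3" by (rule poly_nonneg3) (use t in auto)
    ultimately show ?thesis by linarith
  next
    assume b: "b = a + 1"
    have "D - (a*b*(a-1) + (a-2)*a*(a-1)*(b-2) + 2*a*b*(b-2) + (b-3)*b*(a-1)*(b-2)) = 18 + 36*t + 16*t^2 + 2*t^3"
      unfolding D_def b t(1) by (simp add: algebra_simps power2_eq_square power3_eq_cube)
    moreover have "0 \<le> 18 + 36*t + 16*t^2 + 2*t^3" by (rule poly_nonneg3) (use t in auto)
    ultimately show ?thesis by linarith
  qed
  hence "(1/(2*(b-2)) + (a-2)/(2*b) + 1/(a-1) + (b-3)/(2*a)) * D \<le> 1 * D"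
    unfolding distrib_right e1 e2 e3 e4 by simp
  thus ?thesis using Dp by (simp only: mult_le_cancel_right_pos)
qed

lemma sum_const_on: "(\<And>y. y \<in> S \<Longrightarrow> f y = (k::real)) \<Longrightarrow> sum f S = real (card S) * k"
  by (simp add: sum.cong[of S S f "\<lambda>_. k"])

lemma case_c_big:
  fixes A B :: "'a set"
  assumes G: "simple_graph (A\<union>B) E" and disj: "A \<inter> B = {}"
    and c: "4 \<le> card A" "card A \<le> card B" "card B \<le> card A + 1"
    and a0: "a0 \<in> A" and b12: "b1 \<in> B" "b2 \<in> B" "b1 \<noteq> b2"
    and edges: "\<And>x c. x\<in>A \<Longrightarrow> c\<in>B \<Longrightarrow> \<not>(x = a0 \<and> (c = b1 \<or> c = b2)) \<Longrightarrow> {x,c}\<in>E"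
  shows "\<exists>\<omega>. frac_triangle_packing (A \<union> B) E \<omega> \<and>
             (\<forall>T\<in>triangles (A \<union> B) E. 0 < \<omega> T \<longrightarrow> cross A B T) \<and>
             (\<forall>e\<in>E. (e \<subseteq> A \<or> e \<subseteq> B) \<longrightarrow> edge_weight (A \<union> B) E \<omega> e = 1 / 2)"
proof -
  have finA: "finite A" and finB: "finite B" using G unfolding simple_graph_def by auto
  define a where "a = card A"
  define b where "b = card B"
  have ab: "4 \<le> a" "a \<le> b" "b \<le> a + 1" using c a_def b_def by auto
  define r where "r x c \<longleftrightarrow> x \<in> A \<and> c \<in> B \<and> \<not>(x = a0 \<and> (c = b1 \<or> c = b2))" for x c
  have rE: "x\<in>A \<and> c\<in>B \<and> {x,c}\<in>E" if "r x c" for x c using that edges r_def by auto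
  have B2: "{b1,b2} \<subseteq> B" using b12 by auto
  have cB2: "card (B - {b1,b2}) = b - 2" using B2 b12 finB b_def by (simp add: card_Diff_subset)
  have cA1: "card (A - {a0}) = a - 1" using a0 finA a_def by simp
  have NB1: "card {e\<in>B. r x e \<and> r y e} = b - 2" if "x\<in>A" "y\<in>A" "x = a0 \<or> y = a0" for x y
  proof -
    have "{e\<in>B. r x e \<and> r y e} = B - {b1,b2}" using that r_def by auto
    thus ?thesis using cB2 by simp
  qed
  have NB2: "card {e\<in>B. r x e \<and> r y e} = b" if "x\<in>A" "y\<in>A" "x \<noteq> a0" "y \<noteq> a0" for x y
  proof -
    have "{e\<in>B. r x e \<and> r y e} = B" using that r_def by auto
    thus ?thesis using b_def by simp
  qed
  have NA1: "card {z\<in>A. r z c \<and> r z d} = a - 1" if "c\<in>B" "d\<in>B" "c \<in> {b1,b2} \<or> d \<in> {b1,b2}" for c d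
  proof -
    have "{z\<in>A. r z c \<and> r z d} = A - {a0}" using that r_def by auto
    thus ?thesis using cA1 by simp
  qed
  have NA2: "card {z\<in>A. r z c \<and> r z d} = a" if "c\<in>B" "d\<in>B" "c \<notin> {b1,b2}" "d \<notin> {b1,b2}" for c d
  proof -
    have "{z\<in>A. r z c \<and> r z d} = A" using that r_def by auto
    thus ?thesis using a_def by simp
  qed
  have ra: "real (a-1) = real a - 1" "real (a-2) = real a - 2" using ab by (auto simp: of_nat_diff)
  have rb: "real (b-1) = real b - 1" "real (b-2) = real b - 2" "real (b-3) = real b - 3" using ab by (auto simp: of_nat_diff)
  have rab: "real a \<ge> 4" "real b = real a \<or> real b = real a + 1" using ab by auto
  show ?thesis
  proof (rule uniform[OF G disj rE])
    show "{c\<in>B. r x c \<and> r y c} \<noteq> {}" if "x\<in>A" "y\<in>A" "x\<noteq>y" for x y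
    proof
      assume h: "{c\<in>B. r x c \<and> r y c} = {}"
      have "card {c\<in>B. r x c \<and> r y c} \<ge> b - 2"
        using NB1[OF that(1,2)] NB2[OF that(1,2)] by (cases "x = a0 \<or> y = a0") auto
      thus False unfolding h using ab by simp
    qed
    show "{x\<in>A. r x c \<and> r x d} \<noteq> {}" if "c\<in>B" "d\<in>B" "c\<noteq>d" for c d
    proof
      assume h: "{x\<in>A. r x c \<and> r x d} = {}"
      have "card {x\<in>A. r x c \<and> r x d} \<ge> a - 1"
        using NA1[OF that(1,2)] NA2[OF that(1,2)] by (cases "c \<in> {b1,b2} \<or> d \<in> {b1,b2}") auto
      thus False unfolding h using ab by simp
    qed
  next
    fix x c assume xc: "r x c"
    hence x: "x \<in> A" and cB: "c \<in> B" and nx: "\<not>(x = a0 \<and> (c = b1 \<or> c = b2))" unfolding r_def by auto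
    define SA where "SA = {y\<in>A-{x}. r y c}"
    define SB where "SB = {d\<in>B-{c}. r x d}"
    define fa where "fa y = 1/(2*real(card{e\<in>B. r x e \<and> r y e}))" for y
    define fb where "fb d = 1/(2*real(card{z\<in>A. r z c \<and> r z d}))" for d
    have "sum fa SA + sum fb SB \<le> 1"
    proof (cases "x = a0")
      case True
      hence cn: "c \<notin> {b1,b2}" using nx by auto
      have SAe: "SA = A - {a0}" unfolding SA_def r_def using True cB cn by auto
      have SBe: "SB = B - {c,b1,b2}" unfolding SB_def r_def using True x by auto
      have "sum fa SA = real (a-1) * (1/(2*real(b-2)))"
        unfolding SAe using sum_const_on[of "A - {a0}" fa "1/(2*real(b-2))"] NB1 True x cA1
        unfolding fa_def by auto
      moreover have "sum fb SB = real (b-3) * (1/(2*real a))"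
      proof -
        have "card SB = b - 3" unfolding SBe using B2 cB cn b12 finB b_def by (simp add: card_Diff_subset)
        thus ?thesis using sum_const_on[of SB fb "1/(2*real a)"] NA2 cB cn SBe unfolding fb_def by auto
      qed
      ultimately have "sum fa SA + sum fb SB = (real a - 1)/(2*(real b - 2)) + (real b - 3)/(2*real a)"
        unfolding ra rb by simp
      thus ?thesis using I1[OF rab] by simp
    next
      case False
      note xa = False
      show ?thesis
      proof (cases "c \<in> {b1,b2}")
        case True
        have SAe: "SA = A - {x, a0}" unfolding SA_def r_def using True cB by auto
        have SBe: "SB = B - {c}" unfolding SB_def r_def using xa x by auto
        have "sum fa SA = real (a-2) * (1/(2*real b))"
        proof -
          have "card SA = a - 2" unfolding SAe using x a0 xa finA a_def by (simp add: card_Diff_subset)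
          thus ?thesis using sum_const_on[of SA fa "1/(2*real b)"] NB2 x xa SAe unfolding fa_def by auto
        qed
        moreover have "sum fb SB = real (b-1) * (1/(2*real (a-1)))"
        proof -
          have "card SB = b - 1" unfolding SBe using cB finB b_def by simp
          thus ?thesis using sum_const_on[of SB fb "1/(2*real (a-1))"] NA1 cB True SBe unfolding fb_def by auto
        qed
        ultimately have "sum fa SA + sum fb SB = (real a - 2)/(2*real b) + (real b - 1)/(2*(real a - 1))"
          unfolding ra rb by simp
        thus ?thesis using I2[OF rab] by simp
      next
        case False
        have SAe: "SA = insert a0 (A - {x, a0})" unfolding SA_def r_def using False cB xa x a0 by auto
        have SBe: "SB = {b1,b2} \<union> (B - {c,b1,b2})" unfolding SB_def r_def using xa x False B2 by auto
        have "sum fa SA = fa a0 + sum fa (A - {x, a0})" unfolding SAe using finA by simp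
        also have "fa a0 = 1/(2*real(b-2))" unfolding fa_def using NB1[OF x a0] by simp
        also have "sum fa (A - {x, a0}) = real (a-2) * (1/(2*real b))"
        proof -
          have "card (A - {x,a0}) = a - 2" using x a0 xa finA a_def by (simp add: card_Diff_subset)
          thus ?thesis using sum_const_on[of "A - {x,a0}" fa "1/(2*real b)"] NB2 x xa unfolding fa_def by auto
        qed
        finally have sA: "sum fa SA = 1/(2*real(b-2)) + real (a-2) * (1/(2*real b))" .
        have "sum fb SB = sum fb {b1,b2} + sum fb (B - {c,b1,b2})" unfolding SBe using finB
          by (subst sum.union_disjoint) auto
        also have "sum fb {b1,b2} = 2 * (1/(2*real(a-1)))"
          using NA1[OF cB b12(1)] NA1[OF cB b12(2)] b12(3) unfolding fb_def by simp
        also have "sum fb (B - {c,b1,b2}) = real (b-3) * (1/(2*real a))"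
        proof -
          have "card (B - {c,b1,b2}) = b - 3" using B2 cB False b12 finB b_def by (simp add: card_Diff_subset)
          thus ?thesis using sum_const_on[of "B - {c,b1,b2}" fb "1/(2*real a)"] NA2 cB False unfolding fb_def by auto
        qed
        finally have sB: "sum fb SB = 2 * (1/(2*real(a-1))) + real (b-3) * (1/(2*real a))" .
        have "sum fa SA + sum fb SB = 1/(2*(real b-2)) + (real a-2)/(2*real b) + 1/(real a-1) + (real b-3)/(2*real a)"
        proof -
          have h: "2 * (1/(2*y)) = 1/y" for y :: real by simp
          show ?thesis unfolding sA sB ra rb h by simp
        qed
        thus ?thesis using I3[OF rab] by simp
      qed
    qed
    thus "(\<Sum>y\<in>{y\<in>A-{x}. r y c}. 1/(2*real(card{e\<in>B. r x e \<and> r y e})))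
        + (\<Sum>d\<in>{d\<in>B-{c}. r x d}. 1/(2*real(card{z\<in>A. r z c \<and> r z d}))) \<le> 1"
      unfolding SA_def SB_def fa_def fb_def .
  qed
qed

lemma case_d_explicit:
  fixes x1 x2 z c1 c2 d1 d2 d3 :: 'a
  assumes G: "simple_graph (A\<union>B) E" and disj: "A \<inter> B = {}"
    and AA: "A = {x1,x2,z}" and BB: "B = {c1,c2,d1,d2,d3}"
    and dA: "x1 \<noteq> x2" "x1 \<noteq> z" "x2 \<noteq> z"
    and dB: "c1 \<noteq> c2" "c1 \<noteq> d1" "c1 \<noteq> d2" "c1 \<noteq> d3" "c2 \<noteq> d1" "c2 \<noteq> d2" "c2 \<noteq> d3"
            "d1 \<noteq> d2" "d1 \<noteq> d3" "d2 \<noteq> d3"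
    and edges: "\<And>x c. x\<in>A \<Longrightarrow> c\<in>B \<Longrightarrow> \<not>(x=x1 \<and> c=c1) \<Longrightarrow> \<not>(x=x2 \<and> c=c2) \<Longrightarrow> {x,c}\<in>E"
  shows "\<exists>\<omega>. frac_triangle_packing (A \<union> B) E \<omega> \<and>
             (\<forall>T\<in>triangles (A \<union> B) E. 0 < \<omega> T \<longrightarrow> cross A B T) \<and>
             (\<forall>e\<in>E. (e \<subseteq> A \<or> e \<subseteq> B) \<longrightarrow> edge_weight (A \<union> B) E \<omega> e = 1 / 2)"
proof -
  have dAB: "x1 \<noteq> c1" "x1 \<noteq> c2" "x1 \<noteq> d1" "x1 \<noteq> d2" "x1 \<noteq> d3" "x2 \<noteq> c1" "x2 \<noteq> c2" "x2 \<noteq> d1" "x2 \<noteq> d2" "x2 \<noteq> d3" "z \<noteq> c1" "z \<noteq> c2" "z \<noteq> d1" "z \<noteq> d2" "z \<noteq> d3"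
    using disj AA BB by auto
  note d = dA dB dAB
  note dd = d d[symmetric]
  define r where "r x c \<longleftrightarrow> x\<in>A \<and> c\<in>B \<and> \<not>(x=x1 \<and> c=c1) \<and> \<not>(x=x2 \<and> c=c2)" for x c
  define fA :: "'a set \<Rightarrow> 'a \<Rightarrow> real" where "fA P c = (if c \<in> {d1,d2,d3} then 1/6 else 0)" for P c
  define fB :: "'a set \<Rightarrow> 'a \<Rightarrow> real" where "fB Q x = (if Q \<subseteq> {d1,d2,d3} then 1/6 else if Q = {c1,c2} then (if x = z then 1/2 else 0) else (if x = z then 1/6 else 1/3))" for Q x
  have finA: "finite A" and finB: "finite B" using AA BB by auto
  show ?thesis
  proof (rule main[OF G disj, of r fA fB])
    show "\<And>x c. r x c \<Longrightarrow> x\<in>A \<and> c\<in>B \<and> {x,c}\<in>E" using edges unfolding r_def by auto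
    show "\<And>P c. 0 \<le> fA P c" unfolding fA_def by auto
    show "\<And>Q x. 0 \<le> fB Q x" unfolding fB_def by auto
    show "\<And>x y. x\<in>A \<Longrightarrow> y\<in>A \<Longrightarrow> x\<noteq>y \<Longrightarrow> (\<Sum>c\<in>{c\<in>B. r x c \<and> r y c}. fA {x,y} c) = 1/2"
      using finB unfolding sum.inter_filter[OF finB] unfolding BB AA r_def fA_def using dd by auto
    show "\<And>c d. c\<in>B \<Longrightarrow> d\<in>B \<Longrightarrow> c\<noteq>d \<Longrightarrow> (\<Sum>x\<in>{x\<in>A. r x c \<and> r x d}. fB {c,d} x) = 1/2"
      unfolding sum.inter_filter[OF finA] unfolding BB AA r_def fB_def using dd by (auto simp: doubleton_eq_iff)
    show "\<And>x c. r x c \<Longrightarrow> (\<Sum>y\<in>{y\<in>A-{x}. r y c}. fA {x,y} c) + (\<Sum>d\<in>{d\<in>B-{c}. r x d}. fB {c,d} x) \<le> 1"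
      unfolding set_diff_filter sum.inter_filter[OF finA] sum.inter_filter[OF finB]
      unfolding BB AA r_def fA_def fB_def using dd by (auto simp: doubleton_eq_iff)
  qed
qed

lemma case_c3_explicit:
  fixes p y z b1 b2 e3 :: 'a
  assumes G: "simple_graph (A\<union>B) E" and disj: "A \<inter> B = {}"
    and AA: "A = {p,y,z}" and BB: "B = {b1,b2,e3}"
    and dA: "p \<noteq> y" "p \<noteq> z" "y \<noteq> z"
    and dB: "b1 \<noteq> b2" "b1 \<noteq> e3" "b2 \<noteq> e3"
    and edges: "\<And>x c. x\<in>A \<Longrightarrow> c\<in>B \<Longrightarrow> \<not>(x = p \<and> (c = b1 \<or> c = b2)) \<Longrightarrow> {x,c}\<in>E"
  shows "\<exists>\<omega>. frac_triangle_packing (A \<union> B) E \<omega> \<and>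
             (\<forall>T\<in>triangles (A \<union> B) E. 0 < \<omega> T \<longrightarrow> cross A B T) \<and>
             (\<forall>e\<in>E. (e \<subseteq> A \<or> e \<subseteq> B) \<longrightarrow> edge_weight (A \<union> B) E \<omega> e = 1 / 2)"
proof -
  have dAB: "p \<noteq> b1" "p \<noteq> b2" "p \<noteq> e3" "y \<noteq> b1" "y \<noteq> b2" "y \<noteq> e3" "z \<noteq> b1" "z \<noteq> b2" "z \<noteq> e3"
    using disj AA BB by auto
  note d = dA dB dAB
  note dd = d d[symmetric]
  define r where "r x c \<longleftrightarrow> x\<in>A \<and> c\<in>B \<and> \<not>(x = p \<and> (c = b1 \<or> c = b2))" for x c
  define fA :: "'a set \<Rightarrow> 'a \<Rightarrow> real" where "fA P c = (if p \<in> P then (if c = e3 then 1/2 else 0) else (if c \<in> {b1,b2} then 1/4 else 0))" for P c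
  define fB :: "'a set \<Rightarrow> 'a \<Rightarrow> real" where "fB Q x = (if x = p then 0 else 1/4)" for Q x
  have finA: "finite A" and finB: "finite B" using AA BB by auto
  show ?thesis
  proof (rule main[OF G disj, of r fA fB])
    show "\<And>x c. r x c \<Longrightarrow> x\<in>A \<and> c\<in>B \<and> {x,c}\<in>E" using edges unfolding r_def by auto
    show "\<And>P c. 0 \<le> fA P c" unfolding fA_def by auto
    show "\<And>Q x. 0 \<le> fB Q x" unfolding fB_def by auto
    show "\<And>x y. x\<in>A \<Longrightarrow> y\<in>A \<Longrightarrow> x\<noteq>y \<Longrightarrow> (\<Sum>c\<in>{c\<in>B. r x c \<and> r y c}. fA {x,y} c) = 1/2"
      unfolding sum.inter_filter[OF finB] unfolding BB AA r_def fA_def using dd by auto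
    show "\<And>c d. c\<in>B \<Longrightarrow> d\<in>B \<Longrightarrow> c\<noteq>d \<Longrightarrow> (\<Sum>x\<in>{x\<in>A. r x c \<and> r x d}. fB {c,d} x) = 1/2"
      unfolding sum.inter_filter[OF finA] unfolding BB AA r_def fB_def using dd by auto
    show "\<And>x c. r x c \<Longrightarrow> (\<Sum>y\<in>{y\<in>A-{x}. r y c}. fA {x,y} c) + (\<Sum>d\<in>{d\<in>B-{c}. r x d}. fB {c,d} x) \<le> 1"
      unfolding set_diff_filter sum.inter_filter[OF finA] sum.inter_filter[OF finB]
      unfolding BB AA r_def fA_def fB_def using dd by auto
  qed
qed

lemma case_c4_explicit:
  fixes p y z b1 b2 e3 e4 :: 'a
  assumes G: "simple_graph (A\<union>B) E" and disj: "A \<inter> B = {}"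
    and AA: "A = {p,y,z}" and BB: "B = {b1,b2,e3,e4}"
    and dA: "p \<noteq> y" "p \<noteq> z" "y \<noteq> z"
    and dB: "b1 \<noteq> b2" "b1 \<noteq> e3" "b2 \<noteq> e3" "b1 \<noteq> e4" "b2 \<noteq> e4" "e3 \<noteq> e4"
    and edges: "\<And>x c. x\<in>A \<Longrightarrow> c\<in>B \<Longrightarrow> \<not>(x = p \<and> (c = b1 \<or> c = b2)) \<Longrightarrow> {x,c}\<in>E"
  shows "\<exists>\<omega>. frac_triangle_packing (A \<union> B) E \<omega> \<and>
             (\<forall>T\<in>triangles (A \<union> B) E. 0 < \<omega> T \<longrightarrow> cross A B T) \<and>
             (\<forall>e\<in>E. (e \<subseteq> A \<or> e \<subseteq> B) \<longrightarrow> edge_weight (A \<union> B) E \<omega> e = 1 / 2)"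
proof -
  have dAB: "p \<noteq> b1" "p \<noteq> b2" "p \<noteq> e3" "y \<noteq> b1" "y \<noteq> b2" "y \<noteq> e3" "z \<noteq> b1" "z \<noteq> b2" "z \<noteq> e3"
     "p \<noteq> e4" "y \<noteq> e4" "z \<noteq> e4"
    using disj AA BB by auto
  note d = dA dB dAB
  note dd = d d[symmetric]
  define r where "r x c \<longleftrightarrow> x\<in>A \<and> c\<in>B \<and> \<not>(x = p \<and> (c = b1 \<or> c = b2))" for x c
  define fA :: "'a set \<Rightarrow> 'a \<Rightarrow> real" where "fA P c = (if p \<in> P then (if c \<in> {e3,e4} then 1/4 else 0) else (if c \<in> {b1,b2} then 1/4 else 0))" for P c
  define fB :: "'a set \<Rightarrow> 'a \<Rightarrow> real" where "fB Q x = (if b1 \<notin> Q \<and> b2 \<notin> Q then (if x = p then 1/2 else 0) else (if x = p then 0 else 1/4))" for Q x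
  have finA: "finite A" and finB: "finite B" using AA BB by auto
  show ?thesis
  proof (rule main[OF G disj, of r fA fB])
    show "\<And>x c. r x c \<Longrightarrow> x\<in>A \<and> c\<in>B \<and> {x,c}\<in>E" using edges unfolding r_def by auto
    show "\<And>P c. 0 \<le> fA P c" unfolding fA_def by auto
    show "\<And>Q x. 0 \<le> fB Q x" unfolding fB_def by auto
    show "\<And>x y. x\<in>A \<Longrightarrow> y\<in>A \<Longrightarrow> x\<noteq>y \<Longrightarrow> (\<Sum>c\<in>{c\<in>B. r x c \<and> r y c}. fA {x,y} c) = 1/2"
      unfolding sum.inter_filter[OF finB] unfolding BB AA r_def fA_def using dd by auto
    show "\<And>c d. c\<in>B \<Longrightarrow> d\<in>B \<Longrightarrow> c\<noteq>d \<Longrightarrow> (\<Sum>x\<in>{x\<in>A. r x c \<and> r x d}. fB {c,d} x) = 1/2"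
      unfolding sum.inter_filter[OF finA] unfolding BB AA r_def fB_def using dd by auto
    show "\<And>x c. r x c \<Longrightarrow> (\<Sum>y\<in>{y\<in>A-{x}. r y c}. fA {x,y} c) + (\<Sum>d\<in>{d\<in>B-{c}. r x d}. fB {c,d} x) \<le> 1"
      unfolding set_diff_filter sum.inter_filter[OF finA] sum.inter_filter[OF finB]
      unfolding BB AA r_def fA_def fB_def using dd by auto
  qed
qed

lemma pair_eq:
  assumes "x\<in>A" "c\<in>B" "x'\<in>A" "c'\<in>B" "A\<inter>B = {}"
  shows "{x,c} = {x',c'} \<longleftrightarrow> x = x' \<and> c = c'"
  using assms by (auto simp: doubleton_eq_iff)

lemma edge_in:
  assumes "x\<in>A" "c\<in>B" "bip_edges E A B = complete_bip A B - F" "{x,c} \<notin> F"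
  shows "{x,c} \<in> E"
proof -
  have "{x,c} \<in> complete_bip A B" using assms unfolding complete_bip_def by auto
  hence "{x,c} \<in> bip_edges E A B" using assms by auto
  thus ?thesis unfolding bip_edges_def by auto
qed

theorem proposition7p2:
  fixes A B :: "'a set" and E :: "'a set set"
  assumes graph: "simple_graph (A \<union> B) E"
    and disj: "A \<inter> B = {}"
    and cases:
      "(2 \<le> card A \<and> card A \<le> card B \<and> card B \<le> card A + 2 \<and>
          bip_edges E A B = complete_bip A B)
       \<or> (3 \<le> card A \<and> card A \<le> card B \<and> card B \<le> card A + 1 \<and>
          (\<exists>M. M \<subseteq> complete_bip A B \<and> is_matching M \<and>
               bip_edges E A B = complete_bip A B - M))
       \<or> (3 \<le> card A \<and> card A \<le> card B \<and> card B \<le> card A + 1 \<and>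
          (\<exists>a b1 b2. a \<in> A \<and> b1 \<in> B \<and> b2 \<in> B \<and> b1 \<noteq> b2 \<and>
               bip_edges E A B = complete_bip A B - {{a, b1}, {a, b2}}))
       \<or> (card A = 3 \<and> card B = 5 \<and>
          (\<exists>M. M \<subseteq> complete_bip A B \<and> is_matching M \<and> card M = 2 \<and>
               bip_edges E A B = complete_bip A B - M))"
  shows "\<exists>\<omega>. frac_triangle_packing (A \<union> B) E \<omega> \<and>
             (\<forall>T\<in>triangles (A \<union> B) E. 0 < \<omega> T \<longrightarrow> cross A B T) \<and>
             (\<forall>e\<in>E. (e \<subseteq> A \<or> e \<subseteq> B) \<longrightarrow> edge_weight (A \<union> B) E \<omega> e = 1 / 2)"
proof -
  have finA: "finite A" and finB: "finite B" using graph unfolding simple_graph_def by auto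
  consider (a) "2 \<le> card A \<and> card A \<le> card B \<and> card B \<le> card A + 2 \<and> bip_edges E A B = complete_bip A B"
    | (b) "3 \<le> card A \<and> card A \<le> card B \<and> card B \<le> card A + 1 \<and>
          (\<exists>M. M \<subseteq> complete_bip A B \<and> is_matching M \<and> bip_edges E A B = complete_bip A B - M)"
    | (c) "3 \<le> card A \<and> card A \<le> card B \<and> card B \<le> card A + 1 \<and>
          (\<exists>a b1 b2. a \<in> A \<and> b1 \<in> B \<and> b2 \<in> B \<and> b1 \<noteq> b2 \<and>
               bip_edges E A B = complete_bip A B - {{a, b1}, {a, b2}})"
    | (d) "card A = 3 \<and> card B = 5 \<and>
          (\<exists>M. M \<subseteq> complete_bip A B \<and> is_matching M \<and> card M = 2 \<and>
               bip_edges E A B = complete_bip A B - M)"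
    using cases by blast
  thus ?thesis
  proof cases
    case a thus ?thesis using case_a[OF graph disj] by blast
  next
    case b
    then obtain M where M: "M \<subseteq> complete_bip A B" "is_matching M" "bip_edges E A B = complete_bip A B - M"
      and cb: "3 \<le> card A" "card A \<le> card B" "card B \<le> card A + 1" by blast
    obtain mu where mu: "inj_on mu A" "mu ` A \<subseteq> B" "\<forall>x\<in>A. \<forall>c\<in>B. {x,c}\<in>M \<longrightarrow> mu x = c"
      using extend_matching[OF finA finB disj cb(2) M(1,2)] by blast
    show ?thesis
    proof (rule case_b_mu[OF graph disj cb mu(1,2)])
      fix x c assume xc: "x \<in> A" "c \<in> B" "c \<noteq> mu x"
      hence "{x,c} \<notin> M" using mu(3) by auto
      thus "{x,c} \<in> E" using edge_in[OF xc(1,2) M(3)] by simp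
    qed
  next
    case c
    then obtain a0 b1 b2 where ab: "a0 \<in> A" "b1 \<in> B" "b2 \<in> B" "b1 \<noteq> b2"
      and bip: "bip_edges E A B = complete_bip A B - {{a0, b1}, {a0, b2}}"
      and cc: "3 \<le> card A" "card A \<le> card B" "card B \<le> card A + 1" by blast
    have edges: "{x,c}\<in>E" if "x\<in>A" "c\<in>B" "\<not>(x = a0 \<and> (c = b1 \<or> c = b2))" for x c
    proof (rule edge_in[OF that(1,2) bip])
      show "{x,c} \<notin> {{a0, b1}, {a0, b2}}" using that ab pair_eq[OF that(1,2) ab(1) ab(2) disj]
          pair_eq[OF that(1,2) ab(1) ab(3) disj] by auto
    qed
    show ?thesis
    proof (cases "4 \<le> card A")
      case True
      thus ?thesis using case_c_big[OF graph disj True cc(2,3) ab edges] by blast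
    next
      case False
      hence A3: "card A = 3" using cc by simp
      have "card (A - {a0}) = 2" using A3 ab finA by simp
      then obtain y z where yz: "A - {a0} = {y,z}" "y \<noteq> z" by (meson card_2_iff)
      have AA: "A = {a0,y,z}" using yz ab by auto
      have dA: "a0 \<noteq> y" "a0 \<noteq> z" "y \<noteq> z" using yz by auto
      have B2: "{b1,b2} \<subseteq> B" using ab by auto
      have cBr: "card (B - {b1,b2}) = card B - 2" using B2 ab finB by (simp add: card_Diff_subset)
      show ?thesis
      proof (cases "card B = 3")
        case True
        hence "card (B - {b1,b2}) = 1" using cBr by simp
        then obtain e3 where e3: "B - {b1,b2} = {e3}" by (meson card_1_singletonE)
        have BB: "B = {b1,b2,e3}" using e3 B2 by auto
        have dB: "b1 \<noteq> b2" "b1 \<noteq> e3" "b2 \<noteq> e3" using e3 ab by auto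
        show ?thesis using case_c3_explicit[OF graph disj AA BB dA dB edges] by blast
      next
        case False
        hence "card B = 4" using cc A3 by simp
        hence "card (B - {b1,b2}) = 2" using cBr by simp
        then obtain e3 e4 where e34: "B - {b1,b2} = {e3,e4}" "e3 \<noteq> e4" by (meson card_2_iff)
        have BB: "B = {b1,b2,e3,e4}" using e34 B2 by auto
        have dB: "b1 \<noteq> b2" "b1 \<noteq> e3" "b2 \<noteq> e3" "b1 \<noteq> e4" "b2 \<noteq> e4" "e3 \<noteq> e4" using e34 ab by auto
        show ?thesis using case_c4_explicit[OF graph disj AA BB dA dB edges] by blast
      qed
    qed
  next
    case d
    then obtain M where M: "M \<subseteq> complete_bip A B" "is_matching M" "card M = 2" "bip_edges E A B = complete_bip A B - M"
      and cd: "card A = 3" "card B = 5" by blast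
    obtain e1 e2 where e12: "M = {e1,e2}" "e1 \<noteq> e2" using M(3) by (meson card_2_iff)
    obtain x1 c1 where xc1: "x1 \<in> A" "c1 \<in> B" "e1 = {x1,c1}" using M(1) e12 unfolding complete_bip_def by auto
    obtain x2 c2 where xc2: "x2 \<in> A" "c2 \<in> B" "e2 = {x2,c2}" using M(1) e12 unfolding complete_bip_def by auto
    have "e1 \<inter> e2 = {}" using M(2) e12 unfolding is_matching_def by auto
    hence dx: "x1 \<noteq> x2" "c1 \<noteq> c2" using xc1 xc2 by auto
    have "card (A - {x1,x2}) = 1" using cd xc1 xc2 dx finA by (simp add: card_Diff_subset)
    then obtain z where z: "A - {x1,x2} = {z}" by (meson card_1_singletonE)
    have AA: "A = {x1,x2,z}" using z xc1 xc2 by auto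
    have dA: "x1 \<noteq> x2" "x1 \<noteq> z" "x2 \<noteq> z" using z dx by auto
    have "card (B - {c1,c2}) = 3" using cd xc1 xc2 dx finB by (simp add: card_Diff_subset)
    then obtain d1 d2 d3 where d: "B - {c1,c2} = {d1,d2,d3}" "d1 \<noteq> d2" "d2 \<noteq> d3" "d1 \<noteq> d3" by (meson card_3_iff)
    have BB: "B = {c1,c2,d1,d2,d3}" using d xc1 xc2 by auto
    have dB: "c1 \<noteq> c2" "c1 \<noteq> d1" "c1 \<noteq> d2" "c1 \<noteq> d3" "c2 \<noteq> d1" "c2 \<noteq> d2" "c2 \<noteq> d3"
            "d1 \<noteq> d2" "d1 \<noteq> d3" "d2 \<noteq> d3" using d dx by auto
    have edges: "{x,c}\<in>E" if "x\<in>A" "c\<in>B" "\<not>(x=x1 \<and> c=c1)" "\<not>(x=x2 \<and> c=c2)" for x c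
    proof (rule edge_in[OF that(1,2) M(4)])
      show "{x,c} \<notin> M" unfolding e12 xc1(3) xc2(3) using that pair_eq[OF that(1,2) xc1(1,2) disj]
          pair_eq[OF that(1,2) xc2(1,2) disj] by auto
    qed
    show ?thesis using case_d_explicit[OF graph disj AA BB dA dB edges] by blast
  qed
qed

end
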